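(* Let $\sigma\in S_6$ and let $B:\Delta_0\to\Delta_0$ be a projective linear automorphism of the line $\Delta_0$ such that $B(\mathfrak p_i)=\mathfrak p_{\sigma(i)}$ for $1\le i\le6$. Then there exists a unique $A\in\mathrm{GL}_0(\mathcal S)$ with $A|_{\Delta_0}=B$.
   Context: Work over an algebraically closed field of characteristic $\neq2$. $F(X)=\sum_{i=0}^6f_iX^i$, $f_6\neq0$, distinct roots $\theta_1,\dots,\theta_6$. $P_j(X)=\prod_{i\ne j}(X-\theta_i)$, $\omega_j=P_j(\theta_j)$. Points of $\mathbb P^5$ are identified with $P(X)=\sum_{j=0}^5p_jX^j$; $\pi_j=P(\theta_j)/\omega_j$. $\mathcal S\subset\mathbb P^5$ is defined by $\sum_j\theta_j^i\omega_j\pi_j^2=0$, $i=0,1,2$. $\Delta_0=\{(p_0:p_1:0:0:0:0)\}\subset\mathcal S$ and $\mathfrak p_i=(-\theta_i:1:0:0:0:0)\in\Delta_0$ (the polynomial $X-\theta_i$). $\mathrm{GL}(\mathcal S)$ is the group of automorphisms of $\mathcal S$ which are restrictions of projective linear transformations of $\mathbb P^5$, and $\mathrm{GL}_0(\mathcal S)=\{A\in\mathrm{GL}(\mathcal S):A(\Delta_0)=\Delta_0\}$. *)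

theory Defs
  imports "HOL-Analysis.Analysis" "HOL-Computational_Algebra.Polynomial"
begin

(* The roots theta_1..theta_6 are modelled as theta :: nat => 'a on the index set {1..6}.
   Points of P^5 are nonzero vectors p :: 'a^6 (coordinates p$0..p$5), up to nonzero scalars. *)

definition alg_closed_field :: "'a::field itself \<Rightarrow> bool" where
  "alg_closed_field _ \<longleftrightarrow> (\<forall>q::'a poly. degree q \<ge> 1 \<longrightarrow> (\<exists>x. poly q x = 0))"

definition proj_eq :: "'a::field ^ 'n \<Rightarrow> 'a ^ 'n \<Rightarrow> bool" where
  "proj_eq v w \<longleftrightarrow> (\<exists>c. c \<noteq> 0 \<and> w = c *s v)"

definition evalP :: "'a::field ^ 6 \<Rightarrow> 'a \<Rightarrow> 'a" where
  "evalP p x = p$0 + p$1 * x + p$2 * x^2 + p$3 * x^3 + p$4 * x^4 + p$5 * x^5"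

(* omega_j = P_j(theta_j) = prod_{i /= j} (theta_j - theta_i) *)
definition omega :: "(nat \<Rightarrow> 'a::field) \<Rightarrow> nat \<Rightarrow> 'a" where
  "omega \<theta> j = (\<Prod>i\<in>{1..6} - {j}. (\<theta> j - \<theta> i))"

definition piP :: "(nat \<Rightarrow> 'a::field) \<Rightarrow> 'a ^ 6 \<Rightarrow> nat \<Rightarrow> 'a" where
  "piP \<theta> p j = evalP p (\<theta> j) / omega \<theta> j"

definition inS :: "(nat \<Rightarrow> 'a::field) \<Rightarrow> 'a ^ 6 \<Rightarrow> bool" where
  "inS \<theta> p \<longleftrightarrow> p \<noteq> 0 \<and>
     (\<forall>i::nat\<in>{0,1,2}. (\<Sum>j\<in>{1..6}. \<theta> j ^ i * omega \<theta> j * (piP \<theta> p j)^2) = 0)"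

(* the line Delta_0 = {(p0:p1:0:0:0:0)}, parametrised by (p0,p1) :: 'a^2 *)
definition emb2 :: "'a::zero ^ 2 \<Rightarrow> 'a ^ 6" where
  "emb2 u = (\<chi> k. if k = 0 then u$0 else if k = 1 then u$1 else 0)"

definition inDelta0 :: "'a::field ^ 6 \<Rightarrow> bool" where
  "inDelta0 p \<longleftrightarrow> p \<noteq> 0 \<and> p$2 = 0 \<and> p$3 = 0 \<and> p$4 = 0 \<and> p$5 = 0"

definition frakp :: "(nat \<Rightarrow> 'a::field) \<Rightarrow> nat \<Rightarrow> 'a ^ 2" where
  "frakp \<theta> i = (\<chi> k. if k = 0 then - \<theta> i else 1)"

(* GL(S): projective linear transformations of P^5 (invertible matrices, up to scalar)
   mapping S onto S *)
definition in_GL_S :: "(nat \<Rightarrow> 'a::field) \<Rightarrow> 'a ^ 6 ^ 6 \<Rightarrow> bool" where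
  "in_GL_S \<theta> M \<longleftrightarrow> invertible M \<and> (\<forall>p. inS \<theta> (M *v p) \<longleftrightarrow> inS \<theta> p)"

definition in_GL0_S :: "(nat \<Rightarrow> 'a::field) \<Rightarrow> 'a ^ 6 ^ 6 \<Rightarrow> bool" where
  "in_GL0_S \<theta> M \<longleftrightarrow> in_GL_S \<theta> M \<and> (\<forall>p. inDelta0 (M *v p) \<longleftrightarrow> inDelta0 p)"

definition restricts_to :: "'a::field ^ 6 ^ 6 \<Rightarrow> 'a ^ 2 ^ 2 \<Rightarrow> bool" where
  "restricts_to M B \<longleftrightarrow> (\<forall>u::'a^2. u \<noteq> 0 \<longrightarrow> proj_eq (M *v emb2 u) (emb2 (B *v u)))"

end

theory Submission imports Defs begin


definition rho :: "(nat \<Rightarrow> 'a::field) \<Rightarrow> nat set \<Rightarrow> nat \<Rightarrow> 'a" where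
  "rho \<theta> K k = (\<Prod>l\<in>K-{k}. \<theta> k - \<theta> l)"
definition lag :: "(nat \<Rightarrow> 'a::field) \<Rightarrow> nat set \<Rightarrow> nat \<Rightarrow> 'a poly" where
  "lag \<theta> K k = (\<Prod>l\<in>K-{k}. [:- \<theta> l, 1:])"

lemma poly_lag: "poly (lag \<theta> K k) x = (\<Prod>l\<in>K-{k}. x - \<theta> l)"
  by (simp add: lag_def poly_prod)

lemma rho_nz: assumes "finite K" "inj_on \<theta> K" "k \<in> K" shows "rho \<theta> K k \<noteq> 0"
  using assms by (auto simp: rho_def inj_on_def)

lemma lag_at: assumes "finite K" "inj_on \<theta> K" "j \<in> K" "k \<in> K"
  shows "poly (lag \<theta> K k) (\<theta> j) = (if j = k then rho \<theta> K k else 0)"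
proof (cases "j = k")
  case True then show ?thesis by (simp add: poly_lag rho_def)
next
  case False
  then have "j \<in> K - {k}" using assms by auto
  then show ?thesis using False assms(1) by (auto simp: poly_lag intro!: prod_zero)
qed

lemma degree_lag: assumes "finite K" "k \<in> K"
  shows "degree (lag \<theta> K k) = card K - 1" "coeff (lag \<theta> K k) (card K - 1) = 1"
proof -
  have "degree (lag \<theta> K k) = (\<Sum>l\<in>K-{k}. degree [:- \<theta> l, 1:])"
    unfolding lag_def by (rule degree_prod_eq_sum_degree) auto
  also have "\<dots> = card K - 1" using assms by simp
  finally show d: "degree (lag \<theta> K k) = card K - 1" .
  have "lead_coeff (lag \<theta> K k) = 1" unfolding lag_def lead_coeff_prod by simp
  then show "coeff (lag \<theta> K k) (card K - 1) = 1" using d by simp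
qed

lemma interp:
  assumes "finite K" "inj_on \<theta> K" "degree R < card K"
  shows "R = (\<Sum>k\<in>K. smult (poly R (\<theta> k) / rho \<theta> K k) (lag \<theta> K k))" (is "R = ?S")
proof (rule poly_eqI_degree[of "\<theta> ` K"])
  fix x assume "x \<in> \<theta> ` K"
  then obtain j where j: "j \<in> K" "x = \<theta> j" by auto
  have "poly ?S x = (\<Sum>k\<in>K. poly R (\<theta> k) / rho \<theta> K k * poly (lag \<theta> K k) (\<theta> j))"
    by (simp add: poly_sum j)
  also have "\<dots> = (\<Sum>k\<in>K. if k = j then poly R (\<theta> j) else 0)"
    using assms j by (intro sum.cong) (auto simp: lag_at rho_nz)
  also have "\<dots> = poly R x" using assms j by simp
  finally show "poly R x = poly ?S x" by simp
next
  show "degree R < card (\<theta> ` K)" using assms by (simp add: card_image)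
next
  have "degree ?S \<le> card K - 1"
    by (rule degree_sum_le) (use assms in \<open>auto simp: degree_lag\<close>)
  then show "degree ?S < card (\<theta> ` K)" using assms by (simp add: card_image)
qed

lemma coeff_top:
  assumes "finite K" "inj_on \<theta> K" "degree R < card K"
  shows "coeff R (card K - 1) = (\<Sum>k\<in>K. poly R (\<theta> k) / rho \<theta> K k)"
proof -
  have "coeff R (card K - 1) = coeff (\<Sum>k\<in>K. smult (poly R (\<theta> k) / rho \<theta> K k) (lag \<theta> K k)) (card K - 1)"
    using interp[OF assms] by simp
  also have "\<dots> = (\<Sum>k\<in>K. poly R (\<theta> k) / rho \<theta> K k)"
    unfolding coeff_sum using assms by (intro sum.cong) (use degree_lag(2) in auto)
  finally show ?thesis .
qed

lemma interp_exists:
  fixes v :: "nat \<Rightarrow> 'a::field"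
  assumes "finite K" "inj_on \<theta> K" "K \<noteq> {}"
  shows "\<exists>G. degree G < card K \<and> (\<forall>j\<in>K. poly G (\<theta> j) = v j)"
proof -
  let ?G = "\<Sum>k\<in>K. smult (v k / rho \<theta> K k) (lag \<theta> K k)"
  have "degree ?G \<le> card K - 1"
    by (rule degree_sum_le) (use assms in \<open>auto simp: degree_lag\<close>)
  moreover have "card K > 0" using assms by (simp add: card_gt_0_iff)
  moreover have "poly ?G (\<theta> j) = v j" if j: "j \<in> K" for j
  proof -
    have "poly ?G (\<theta> j) = (\<Sum>k\<in>K. v k / rho \<theta> K k * poly (lag \<theta> K k) (\<theta> j))"
      by (simp add: poly_sum)
    also have "\<dots> = (\<Sum>k\<in>K. if k = j then v j else 0)"
      using assms j by (intro sum.cong) (auto simp: lag_at rho_nz)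
    also have "\<dots> = v j" using assms j by simp
    finally show ?thesis .
  qed
  ultimately show ?thesis by (intro exI[of _ ?G]) auto
qed

lemma sum_low:
  assumes "finite K" "inj_on \<theta> K" "degree R < card K - 1"
  shows "(\<Sum>k\<in>K. poly R (\<theta> k) / rho \<theta> K k) = 0"
  using coeff_top[OF assms(1,2), of R] assms(3) by (simp add: coeff_eq_0)



lemma exhaust_6:
  fixes x :: 6
  shows "x = 0 \<or> x = 1 \<or> x = 2 \<or> x = 3 \<or> x = 4 \<or> x = 5"
proof (induct x)
  case (of_int z)
  then have "z = 0 \<or> z = 1 \<or> z = 2 \<or> z = 3 \<or> z = 4 \<or> z = 5" by fastforce
  then show ?case by auto
qed

lemma vec6_eqI: "(\<And>i::6. i \<in> {0,1,2,3,4,5} \<Longrightarrow> p$i = q$i) \<Longrightarrow> p = q"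
  using exhaust_6 by (auto simp: vec_eq_iff)

definition pv :: "'a::field ^ 6 \<Rightarrow> 'a poly" where
  "pv p = [:p$0, p$1, p$2, p$3, p$4, p$5:]"

lemma poly_pv: "poly (pv p) x = evalP p x"
  by (simp add: pv_def evalP_def algebra_simps power2_eq_square power3_eq_cube power_numeral_reduce)

lemma degree_pv: "degree (pv p) \<le> 5"
  unfolding pv_def by (simp add: degree_pCons_le le_SucI eval_nat_numeral)

lemma pv_inj: "pv p = pv q \<Longrightarrow> p = q"
  unfolding pv_def by (intro vec6_eqI) auto

lemma poly_sum5: fixes G :: "'a::field poly" assumes "degree G \<le> 5"
  shows "poly G x = coeff G 0 + coeff G 1 * x + coeff G 2 * x^2 + coeff G 3 * x^3 + coeff G 4 * x^4 + coeff G 5 * x^5"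
proof -
  have "poly G x = (\<Sum>i\<le>degree G. coeff G i * x ^ i)" by (rule poly_altdef)
  also have "\<dots> = (\<Sum>i\<le>5. coeff G i * x ^ i)"
    using assms by (intro sum.mono_neutral_left) (auto simp: coeff_eq_0)
  also have "\<dots> = coeff G 0 + coeff G 1 * x + coeff G 2 * x^2 + coeff G 3 * x^3 + coeff G 4 * x^4 + coeff G 5 * x^5"
    by (simp add: eval_nat_numeral atMost_Suc algebra_simps)
  finally show ?thesis .
qed

locale six =
  fixes \<theta> :: "nat \<Rightarrow> 'a::field"
  assumes inj: "inj_on \<theta> {1..6}"
begin

abbreviation ev :: "'a^6 \<Rightarrow> nat \<Rightarrow> 'a" where "ev p k \<equiv> evalP p (\<theta> k)"
abbreviation om :: "nat \<Rightarrow> 'a" where "om \<equiv> omega \<theta>"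

lemma om_rho: "om = rho \<theta> {1..6}"
  by (simp add: fun_eq_iff omega_def rho_def)

lemma om_nz: "k \<in> {1..6} \<Longrightarrow> om k \<noteq> 0"
  unfolding om_rho by (rule rho_nz) (use inj in auto)

lemma ev_inj: assumes "\<forall>k\<in>{1..6}. ev p k = ev q k" shows "p = q"
proof -
  have "pv p = pv q"
  proof (rule poly_eqI_degree[of "\<theta> ` {1..6}"])
    show "\<And>x. x \<in> \<theta> ` {1..6} \<Longrightarrow> poly (pv p) x = poly (pv q) x"
      using assms by (auto simp: poly_pv)
    have c: "card (\<theta> ` {1..6}) = 6" using inj by (simp add: card_image)
    show "degree (pv p) < card (\<theta> ` {1..6})" "degree (pv q) < card (\<theta> ` {1..6})"
      unfolding c using degree_pv[of p] degree_pv[of q] by auto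
  qed
  then show ?thesis by (rule pv_inj)
qed

lemma ev_surj: "\<exists>p. \<forall>k\<in>{1..6}. ev p k = v k"
proof -
  obtain G where G: "degree G < card {1..6::nat}" "\<forall>j\<in>{1..6}. poly G (\<theta> j) = v j"
    using interp_exists[of "{1..6}" \<theta> v] inj by auto
  have d: "degree G \<le> 5" using G(1) by simp
  define p :: "'a^6" where "p = (\<chi> i. if i = 0 then coeff G 0 else if i = 1 then coeff G 1 else
     if i = 2 then coeff G 2 else if i = 3 then coeff G 3 else if i = 4 then coeff G 4 else coeff G 5)"
  have "evalP p x = poly G x" for x
    unfolding poly_sum5[OF d] by (simp add: p_def evalP_def)
  then show ?thesis using G by (intro exI[of _ p]) auto
qed

definition vec_of :: "(nat \<Rightarrow> 'a) \<Rightarrow> 'a^6" where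
  "vec_of v = (SOME p. \<forall>k\<in>{1..6}. ev p k = v k)"

lemma ev_vec_of: "k \<in> {1..6} \<Longrightarrow> ev (vec_of v) k = v k"
  unfolding vec_of_def using someI_ex[OF ev_surj[of v]] by blast

lemma vec_ofI: "(\<And>k. k \<in> {1..6} \<Longrightarrow> ev p k = v k) \<Longrightarrow> p = vec_of v"
  by (rule ev_inj) (simp add: ev_vec_of)

lemma ev_add: "evalP (p + q) x = evalP p x + evalP q x"
  by (simp add: evalP_def algebra_simps)
lemma ev_diff: "evalP (p - q) x = evalP p x - evalP q x"
  by (simp add: evalP_def algebra_simps)
lemma ev_scale: "evalP (c *s p) x = c * evalP p x"
  by (simp add: evalP_def algebra_simps)
lemma ev_zero: "evalP 0 x = 0"
  by (simp add: evalP_def)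
lemma ev_sum: "evalP (sum f A) x = (\<Sum>a\<in>A. evalP (f a) x)"
  by (induction A rule: infinite_finite_induct) (auto simp: ev_add ev_zero)

lemma inS_iff: "inS \<theta> p \<longleftrightarrow> p \<noteq> 0 \<and>
   (\<forall>m\<in>{0,1,2::nat}. (\<Sum>k\<in>{1..6}. \<theta> k ^ m * ev p k ^ 2 / om k) = 0)"
proof -
  have "\<theta> k ^ m * om k * (piP \<theta> p k)^2 = \<theta> k ^ m * ev p k ^ 2 / om k" if "k \<in> {1..6}" for k m
    using om_nz[OF that] by (simp add: piP_def power2_eq_square field_simps)
  then have "(\<Sum>k\<in>{1..6}. \<theta> k ^ m * om k * (piP \<theta> p k)^2) = (\<Sum>k\<in>{1..6}. \<theta> k ^ m * ev p k ^ 2 / om k)" for m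
    by (intro sum.cong) auto
  then show ?thesis unfolding inS_def by simp
qed

lemma sum_low6: "degree R \<le> 4 \<Longrightarrow> (\<Sum>k\<in>{1..6}. poly R (\<theta> k) / om k) = 0"
  unfolding om_rho by (rule sum_low) (use inj in auto)

lemma sumW: assumes "m \<le> 2"
  shows "(\<Sum>k\<in>{1..6}. \<theta> k ^ m * (\<alpha> + \<beta> * \<theta> k)^2 / om k) = 0"
proof -
  let ?R = "[:0,1:]^m * [:\<alpha>,\<beta>:]^2"
  have "degree ([:0,1:]^m :: 'a poly) \<le> m" using degree_power_le[of "[:0,1:]::'a poly" m] by simp
  moreover have "degree ([:\<alpha>,\<beta>:]^2) \<le> 2" using degree_power_le[of "[:\<alpha>,\<beta>:]" 2] by (simp split: if_splits)
  ultimately have "degree ?R \<le> m + 2"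
    by (intro order.trans[OF degree_mult_le]) auto
  then have "degree ?R \<le> 4" using assms by simp
  from sum_low6[OF this] show ?thesis by (simp add: algebra_simps)
qed

lemma sumW1: assumes "m \<le> 4"
  shows "(\<Sum>k\<in>{1..6}. \<theta> k ^ m / om k) = 0"
proof -
  let ?R = "[:0,1:]^m :: 'a poly"
  have "degree ?R \<le> 4" using assms by (simp add: degree_power_le order.trans[OF degree_power_le])
  from sum_low6[OF this] show ?thesis by simp
qed

end


context six begin

definition isW :: "'a^6 \<Rightarrow> bool" where
  "isW p \<longleftrightarrow> (\<exists>\<alpha> \<beta>. \<forall>k\<in>{1..6}. ev p k = \<alpha> + \<beta> * \<theta> k)"

definition eps :: "nat \<Rightarrow> nat \<Rightarrow> 'a" where "eps j k = (if k = j then -1 else 1)"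

definition yv :: "nat \<Rightarrow> 'a^6" where "yv j = vec_of (eps j)"
definition one :: "'a^6" where "one = vec_of (\<lambda>k. 1)"

lemma ev_yv: "k \<in> {1..6} \<Longrightarrow> ev (yv j) k = eps j k"
  by (simp add: yv_def ev_vec_of)
lemma ev_one: "k \<in> {1..6} \<Longrightarrow> ev one k = 1"
  by (simp add: one_def ev_vec_of)

lemma eps_sq: "eps j k ^ 2 = 1" by (simp add: eps_def)

lemma two_points: fixes j :: nat obtains a b where "a \<in> {1..6}" "b \<in> {1..6}" "a \<noteq> b" "a \<noteq> j" "b \<noteq> j"
proof -
  consider "j = 1" | "j = 2" | "j \<noteq> 1 \<and> j \<noteq> 2" by blast
  then show ?thesis
  proof cases
    case 1 then show ?thesis using that[of 2 3] by auto
  next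
    case 2 then show ?thesis using that[of 1 3] by auto
  next
    case 3 then show ?thesis using that[of 1 2] by auto
  qed
qed

lemma th_ne: "a \<in> {1..6} \<Longrightarrow> b \<in> {1..6} \<Longrightarrow> a \<noteq> b \<Longrightarrow> \<theta> a \<noteq> \<theta> b"
  using inj by (auto simp: inj_on_def)

lemma affine_two: assumes "a \<in> {1..6}" "b \<in> {1..6}" "a \<noteq> b"
  "\<alpha> + \<beta> * \<theta> a = \<gamma>" "\<alpha> + \<beta> * \<theta> b = \<gamma>"
  shows "\<beta> = 0" "\<alpha> = \<gamma>"
proof -
  have "\<beta> * \<theta> a = \<beta> * \<theta> b" using assms(4,5) by (metis add_left_cancel)
  then have "\<beta> * (\<theta> a - \<theta> b) = 0" by (simp add: right_diff_distrib)
  moreover have "\<theta> a - \<theta> b \<noteq> 0" using th_ne[OF assms(1-3)] by simp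
  ultimately show "\<beta> = 0" by simp
  then show "\<alpha> = \<gamma>" using assms by simp
qed

lemma not_affine_eps: assumes two: "(2::'a) \<noteq> 0" and j: "j \<in> {1..6}"
  shows "\<not> (\<forall>k\<in>{1..6}. eps j k = \<alpha> + \<beta> * \<theta> k)"
proof
  assume h: "\<forall>k\<in>{1..6}. eps j k = \<alpha> + \<beta> * \<theta> k"
  obtain a b where ab: "a \<in> {1..6}" "b \<in> {1..6}" "a \<noteq> b" "a \<noteq> j" "b \<noteq> j" by (rule two_points)
  have "\<alpha> + \<beta> * \<theta> a = 1" "\<alpha> + \<beta> * \<theta> b = 1" using h[rule_format, of a] h[rule_format, of b] ab by (auto simp: eps_def)
  from affine_two[OF ab(1-3) this] have "\<beta> = 0" "\<alpha> = 1" by auto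
  then have "-1 = (1::'a)" using h[rule_format, OF j] by (simp add: eps_def)
  then have "(2::'a) = 0" by (metis add_eq_0_iff one_add_one)
  then show False using two by simp
qed

lemma inS_sq1: assumes "\<forall>k\<in>{1..6}. ev p k ^ 2 = 1" shows "inS \<theta> p"
proof -
  have "p \<noteq> 0" using assms[rule_format, of 1] by (auto simp: ev_zero)
  moreover have "(\<Sum>k\<in>{1..6}. \<theta> k ^ m * ev p k ^ 2 / om k) = 0" if "m \<le> 2" for m
  proof -
    have "(\<Sum>k\<in>{1..6}. \<theta> k ^ m * ev p k ^ 2 / om k) = (\<Sum>k\<in>{1..6}. \<theta> k ^ m / om k)"
      using assms by (intro sum.cong) auto
    also have "\<dots> = 0" using sumW1 that by simp
    finally show ?thesis .
  qed
  note h = this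
  from h[of 0] h[of 1] h[of 2] \<open>p \<noteq> 0\<close> show ?thesis unfolding inS_iff by simp
qed

lemma inS_signed: assumes "\<forall>k\<in>{1..6}. ev p k = eps j k * (\<alpha> + \<beta> * \<theta> k)" "p \<noteq> 0"
  shows "inS \<theta> p"
proof -
  have "(\<Sum>k\<in>{1..6}. \<theta> k ^ m * ev p k ^ 2 / om k) = 0" if "m \<le> 2" for m
  proof -
    have "(\<Sum>k\<in>{1..6}. \<theta> k ^ m * ev p k ^ 2 / om k) = (\<Sum>k\<in>{1..6}. \<theta> k ^ m * (\<alpha> + \<beta> * \<theta> k) ^ 2 / om k)"
      using assms by (intro sum.cong) (auto simp: power_mult_distrib eps_sq)
    also have "\<dots> = 0" using sumW that by simp
    finally show ?thesis .
  qed
  from this[of 0] this[of 1] this[of 2] show ?thesis unfolding inS_iff using assms by simp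
qed

lemma ev_emb2: "evalP (emb2 u) x = u$0 + u$1 * x"
  by (simp add: emb2_def evalP_def)

lemma R1:
  fixes D :: "'a^6^6"
  assumes DW: "\<forall>u::'a^2. u \<noteq> 0 \<longrightarrow> (\<exists>c. c \<noteq> 0 \<and> D *v emb2 u = c *s emb2 u)"
  shows "\<exists>c. c \<noteq> 0 \<and> (\<forall>p. isW p \<longrightarrow> D *v p = c *s p)"
proof -
  define u1 :: "'a^2" where "u1 = (\<chi> i. if i = 0 then 1 else 0)"
  define uX :: "'a^2" where "uX = (\<chi> i. if i = 0 then 0 else 1)"
  have n1: "u1 \<noteq> 0" by (auto simp: u1_def vec_eq_iff)
  have nX: "uX \<noteq> 0" by (auto simp: uX_def vec_eq_iff intro: exI[of _ 1])
  have n3: "u1 + uX \<noteq> 0" by (auto simp: u1_def uX_def vec_eq_iff)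
  obtain c1 where c1: "c1 \<noteq> 0" "D *v emb2 u1 = c1 *s emb2 u1" using DW n1 by blast
  obtain c2 where c2: "c2 \<noteq> 0" "D *v emb2 uX = c2 *s emb2 uX" using DW nX by blast
  obtain c3 where c3: "c3 \<noteq> 0" "D *v emb2 (u1 + uX) = c3 *s emb2 (u1 + uX)" using DW n3 by blast
  have ea: "emb2 (u1 + uX) = emb2 u1 + emb2 uX" by (simp add: emb2_def vec_eq_iff)
  have "c3 *s (emb2 u1 + emb2 uX) = c1 *s emb2 u1 + c2 *s emb2 uX"
    using c1 c2 c3 ea by (simp add: matrix_vector_right_distrib)
  then have e0: "(c3 *s (emb2 u1 + emb2 uX))$0 = (c1 *s emb2 u1 + c2 *s emb2 uX)$0"
    and e1: "(c3 *s (emb2 u1 + emb2 uX))$1 = (c1 *s emb2 u1 + c2 *s emb2 uX)$1" by auto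
  have "c3 = c1" using e0 by (simp add: emb2_def u1_def uX_def)
  moreover have "c3 = c2" using e1 by (simp add: emb2_def u1_def uX_def)
  ultimately have c12: "c2 = c1" by simp
  have "D *v p = c1 *s p" if "isW p" for p
  proof -
    obtain \<alpha> \<beta> where ab: "\<forall>k\<in>{1..6}. ev p k = \<alpha> + \<beta> * \<theta> k" using \<open>isW p\<close> isW_def by auto
    have "p = \<alpha> *s emb2 u1 + \<beta> *s emb2 uX"
      by (rule ev_inj) (simp add: ab ev_add ev_scale ev_emb2 u1_def uX_def)
    then show ?thesis using c1 c2 c12
      by (simp add: matrix_vector_right_distrib vec.scale algebra_simps)
  qed
  then show ?thesis using c1 by blast
qed

end


lemma deg_drop: "degree (G::'a::field poly) \<le> Suc n \<Longrightarrow> coeff G (Suc n) = 0 \<Longrightarrow> degree G \<le> n"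
  by (metis le_Suc_eq leading_coeff_0_iff degree_0 nat.simps(3))

context six begin

lemma classify:
  assumes j: "j \<in> {1..6}"
  and b: "\<forall>m\<le>2. (\<Sum>k\<in>{1..6}. \<theta> k ^ m * (\<theta> k - \<theta> j) * z k / om k) = 0"
  and q: "(\<Sum>k\<in>{1..6}. z k ^ 2 / om k) = 0"
  shows "\<exists>\<alpha> \<beta>. (\<forall>k\<in>{1..6}-{j}. z k = \<alpha> + \<beta> * \<theta> k) \<and> (z j = \<alpha> + \<beta> * \<theta> j \<or> z j = -(\<alpha> + \<beta> * \<theta> j))"
proof -
  define K5 where "K5 = {1..6::nat} - {j}"
  have fK: "finite K5" and iK: "inj_on \<theta> K5" using inj by (auto simp: K5_def intro: inj_on_subset)
  have cK: "card K5 = 5" using j by (simp add: K5_def)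
  have omsplit: "om k = (\<theta> k - \<theta> j) * rho \<theta> K5 k" if k: "k \<in> K5" for k
  proof -
    have e: "{1..6} - {k} = insert j (K5 - {k})" using k j by (auto simp: K5_def)
    show ?thesis unfolding omega_def rho_def e by (subst prod.insert) (auto simp: K5_def)
  qed
  have sumb: "(\<Sum>k\<in>{1..6}. \<theta> k ^ m * (\<theta> k - \<theta> j) * z k / om k) = (\<Sum>k\<in>K5. \<theta> k ^ m * z k / rho \<theta> K5 k)" for m
  proof -
    have "(\<Sum>k\<in>{1..6}. \<theta> k ^ m * (\<theta> k - \<theta> j) * z k / om k) =
       \<theta> j ^ m * (\<theta> j - \<theta> j) * z j / om j + (\<Sum>k\<in>K5. \<theta> k ^ m * (\<theta> k - \<theta> j) * z k / om k)"
      unfolding K5_def using j by (subst sum.remove) auto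
    also have "\<dots> = (\<Sum>k\<in>K5. \<theta> k ^ m * z k / rho \<theta> K5 k)"
    proof -
      have "\<theta> k ^ m * (\<theta> k - \<theta> j) * z k / om k = \<theta> k ^ m * z k / rho \<theta> K5 k" if k: "k \<in> K5" for k
      proof -
        have "\<theta> k - \<theta> j \<noteq> 0" using k j th_ne by (auto simp: K5_def)
        then show ?thesis unfolding omsplit[OF k] by simp
      qed
      then show ?thesis by simp
    qed
    finally show ?thesis .
  qed
  obtain G where G: "degree G < card K5" "\<forall>k\<in>K5. poly G (\<theta> k) = z k"
  proof -
    have "K5 \<noteq> {}" using cK by auto
    then show ?thesis using interp_exists[OF fK iK, of z] that by blast
  qed
  have ct: "coeff R 4 = (\<Sum>k\<in>K5. poly R (\<theta> k) / rho \<theta> K5 k)" if "degree R < 5" for R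
    using coeff_top[OF fK iK, of R] that cK by simp
  have bm: "(\<Sum>k\<in>K5. \<theta> k ^ m * z k / rho \<theta> K5 k) = 0" if "m \<le> 2" for m
    using b that sumb by simp
  have d4: "degree G \<le> 4" using G cK by simp
  have "coeff G 4 = 0" using ct[of G] d4 bm[of 0] G(2) by simp
  with d4 have d3: "degree G \<le> 3" using deg_drop[of G 3] by simp
  have "coeff (pCons 0 G) 4 = 0"
  proof -
    have "degree (pCons 0 G) < 5" using d3 degree_pCons_le[of 0 G] by simp
    then have "coeff (pCons 0 G) 4 = (\<Sum>k\<in>K5. \<theta> k ^ 1 * z k / rho \<theta> K5 k)"
      using ct[of "pCons 0 G"] G(2) by simp
    then show ?thesis using bm[of 1] by simp
  qed
  then have "coeff G 3 = 0" by (simp add: numeral_eq_Suc)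
  with d3 have d2: "degree G \<le> 2" using deg_drop[of G 2] by simp
  have "coeff (pCons 0 (pCons 0 G)) 4 = 0"
  proof -
    have "degree (pCons 0 (pCons 0 G)) < 5"
      using d2 degree_pCons_le[of 0 G] degree_pCons_le[of 0 "pCons 0 G"] by simp
    then have "coeff (pCons 0 (pCons 0 G)) 4 = (\<Sum>k\<in>K5. \<theta> k ^ 2 * z k / rho \<theta> K5 k)"
      using ct[of "pCons 0 (pCons 0 G)"] G(2) by (simp add: power2_eq_square mult.assoc)
    then show ?thesis using bm[of 2] by simp
  qed
  then have "coeff G 2 = 0" by (simp add: numeral_eq_Suc)
  with d2 have d1: "degree G \<le> 1" using deg_drop[of G 1] by (simp add: numeral_2_eq_2)
  define \<alpha> where "\<alpha> = coeff G 0"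
  define \<beta> where "\<beta> = coeff G 1"
  have pG: "poly G x = \<alpha> + \<beta> * x" for x
    using poly_sum5[of G x] d1 by (simp add: coeff_eq_0 \<alpha>_def \<beta>_def)
  have zK: "\<forall>k\<in>K5. z k = \<alpha> + \<beta> * \<theta> k" using G(2) pG by simp
  have "(\<Sum>k\<in>{1..6}. z k ^ 2 / om k) = z j ^ 2 / om j + (\<Sum>k\<in>K5. z k ^ 2 / om k)"
    unfolding K5_def using j by (subst sum.remove) auto
  also have "(\<Sum>k\<in>K5. z k ^ 2 / om k) = (\<Sum>k\<in>K5. (\<alpha> + \<beta> * \<theta> k) ^ 2 / om k)"
    using zK by simp
  finally have e1: "z j ^ 2 / om j + (\<Sum>k\<in>K5. (\<alpha> + \<beta> * \<theta> k) ^ 2 / om k) = 0" using q by simp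
  have "(\<Sum>k\<in>{1..6}. \<theta> k ^ 0 * (\<alpha> + \<beta> * \<theta> k) ^ 2 / om k) = 0" by (rule sumW) simp
  then have "(\<Sum>k\<in>{1..6}. (\<alpha> + \<beta> * \<theta> k) ^ 2 / om k) = 0" by simp
  then have e2: "(\<alpha> + \<beta> * \<theta> j) ^ 2 / om j + (\<Sum>k\<in>K5. (\<alpha> + \<beta> * \<theta> k) ^ 2 / om k) = 0"
    unfolding K5_def using j by (subst (asm) sum.remove) auto
  from e1 e2 have "z j ^ 2 / om j + (\<Sum>k\<in>K5. (\<alpha> + \<beta> * \<theta> k) ^ 2 / om k) = (\<alpha> + \<beta> * \<theta> j) ^ 2 / om j + (\<Sum>k\<in>K5. (\<alpha> + \<beta> * \<theta> k) ^ 2 / om k)"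
    by (simp only:)
  then have "z j ^ 2 / om j = (\<alpha> + \<beta> * \<theta> j) ^ 2 / om j" by (simp only: add_right_cancel)
  then have "z j ^ 2 = (\<alpha> + \<beta> * \<theta> j) ^ 2" using om_nz[OF j] by simp
  then have "z j = \<alpha> + \<beta> * \<theta> j \<or> z j = -(\<alpha> + \<beta> * \<theta> j)" by (simp add: power2_eq_iff)
  then show ?thesis using zK unfolding K5_def by blast
qed

end


context six begin

context
  fixes D :: "'a^6^6" and c :: 'a
  assumes two: "(2::'a) \<noteq> 0"
  and Sp: "\<forall>p. inS \<theta> p \<longrightarrow> inS \<theta> (D *v p)"
  and Dinj: "\<forall>p. D *v p = 0 \<longrightarrow> p = 0"
  and cnz: "c \<noteq> 0"
  and DWc: "\<forall>p. isW p \<longrightarrow> D *v p = c *s p"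
begin

lemma noW: assumes j: "j \<in> {1..6}" and W: "isW (D *v yv j)" shows False
proof -
  obtain \<alpha> \<beta> where ab: "\<forall>k\<in>{1..6}. ev (D *v yv j) k = \<alpha> + \<beta> * \<theta> k" using W isW_def by auto
  define w where "w = vec_of (\<lambda>k. \<alpha>/c + \<beta>/c * \<theta> k)"
  have wv: "ev w k = \<alpha>/c + \<beta>/c * \<theta> k" if "k \<in> {1..6}" for k using that by (simp add: w_def ev_vec_of)
  have "isW w" unfolding isW_def using wv by blast
  then have Dw: "D *v w = c *s w" using DWc by blast
  have "D *v yv j = c *s w"
    by (rule ev_inj) (use cnz in \<open>simp add: ab ev_scale wv field_simps\<close>)
  then have "D *v (yv j - w) = 0" using Dw by (simp add: vec.diff)
  then have "yv j = w" using Dinj by (metis eq_iff_diff_eq_0)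
  then have "\<forall>k\<in>{1..6}. eps j k = \<alpha>/c + \<beta>/c * \<theta> k" using wv ev_yv by metis
  then show False using not_affine_eps[OF two j] by blast
qed

lemma sum_expand:
  "(\<Sum>k\<in>{1..6}. \<theta> k ^ m * (a * d k + z k) ^ 2 / om k) =
   a^2 * (\<Sum>k\<in>{1..6}. \<theta> k ^ m * d k ^ 2 / om k) + 2 * a * (\<Sum>k\<in>{1..6}. \<theta> k ^ m * d k * z k / om k)
   + (\<Sum>k\<in>{1..6}. \<theta> k ^ m * z k ^ 2 / om k)"
proof -
  have "(\<Sum>k\<in>{1..6}. \<theta> k ^ m * (a * d k + z k) ^ 2 / om k) =
    (\<Sum>k\<in>{1..6}. a^2 * (\<theta> k ^ m * d k ^ 2 / om k) + 2 * a * (\<theta> k ^ m * d k * z k / om k) + \<theta> k ^ m * z k ^ 2 / om k)"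
    by (intro sum.cong) (auto simp: power2_eq_square algebra_simps add_divide_distrib)
  then show ?thesis by (simp add: sum.distrib sum_distrib_left)
qed

lemma R2: assumes j: "j \<in> {1..6}"
  shows "\<exists>\<alpha> \<beta>. \<forall>k\<in>{1..6}. ev (D *v yv j) k = eps j k * (\<alpha> + \<beta> * \<theta> k)"
proof -
  define x where "x = vec_of (\<lambda>k. \<theta> k - \<theta> j)"
  have xv: "ev x k = \<theta> k - \<theta> j" if "k \<in> {1..6}" for k using that by (simp add: x_def ev_vec_of)
  have "isW x" unfolding isW_def using xv by (intro exI[of _ "- \<theta> j"] exI[of _ 1]) auto
  then have Dx: "D *v x = c *s x" using DWc by blast
  have iy: "inS \<theta> (yv j)" by (rule inS_sq1) (simp add: ev_yv eps_sq)
  have ixy: "inS \<theta> (x + yv j)"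
  proof (rule inS_signed[of _ j "1 - \<theta> j" 1])
    show "\<forall>k\<in>{1..6}. ev (x + yv j) k = eps j k * (1 - \<theta> j + 1 * \<theta> k)"
      by (auto simp: ev_add xv ev_yv eps_def)
    have "ev (x + yv j) j = -1" using j by (simp add: ev_add xv ev_yv eps_def)
    then show "x + yv j \<noteq> 0" by (auto simp: ev_zero)
  qed
  define z where "z = D *v yv j"
  have iz: "inS \<theta> z" using Sp iy z_def by blast
  have "inS \<theta> (D *v (x + yv j))" using Sp ixy by blast
  then have icz: "inS \<theta> (c *s x + z)" by (simp add: matrix_vector_right_distrib Dx z_def)
  have bb: "(\<Sum>k\<in>{1..6}. \<theta> k ^ m * (\<theta> k - \<theta> j) * ev z k / om k) = 0" if m: "m \<le> 2" for m
  proof -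
    have mm: "m \<in> {0,1,2}" using m by auto
    have q1: "(\<Sum>k\<in>{1..6}. \<theta> k ^ m * ev z k ^ 2 / om k) = 0" using iz mm unfolding inS_iff by blast
    have q2: "(\<Sum>k\<in>{1..6}. \<theta> k ^ m * ev (c *s x + z) k ^ 2 / om k) = 0" using icz mm unfolding inS_iff by blast
    have "(\<Sum>k\<in>{1..6}. \<theta> k ^ m * ev (c *s x + z) k ^ 2 / om k) =
          (\<Sum>k\<in>{1..6}. \<theta> k ^ m * (c * (\<theta> k - \<theta> j) + ev z k) ^ 2 / om k)"
      by (intro sum.cong) (auto simp: ev_add ev_scale xv)
    also have "\<dots> = c^2 * (\<Sum>k\<in>{1..6}. \<theta> k ^ m * (\<theta> k - \<theta> j) ^ 2 / om k)
      + 2 * c * (\<Sum>k\<in>{1..6}. \<theta> k ^ m * (\<theta> k - \<theta> j) * ev z k / om k)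
      + (\<Sum>k\<in>{1..6}. \<theta> k ^ m * ev z k ^ 2 / om k)" by (rule sum_expand)
    also have "(\<Sum>k\<in>{1..6}. \<theta> k ^ m * (\<theta> k - \<theta> j) ^ 2 / om k) = 0"
      using sumW[OF m, of "- \<theta> j" 1] by simp
    finally have "2 * c * (\<Sum>k\<in>{1..6}. \<theta> k ^ m * (\<theta> k - \<theta> j) * ev z k / om k) = 0"
      using q1 q2 by simp
    then show ?thesis using two cnz by simp
  qed
  have q0: "(\<Sum>k\<in>{1..6}. ev z k ^ 2 / om k) = 0"
    using iz unfolding inS_iff by auto
  obtain \<alpha> \<beta> where ab: "\<forall>k\<in>{1..6}-{j}. ev z k = \<alpha> + \<beta> * \<theta> k"
    and abj: "ev z j = \<alpha> + \<beta> * \<theta> j \<or> ev z j = -(\<alpha> + \<beta> * \<theta> j)"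
    using classify[OF j, of "ev z"] bb q0 by blast
  show ?thesis
  proof (cases "ev z j = \<alpha> + \<beta> * \<theta> j")
    case True
    then have "isW z" unfolding isW_def using ab by (intro exI[of _ \<alpha>] exI[of _ \<beta>]) blast
    then show ?thesis using noW[OF j] z_def by blast
  next
    case False
    then have "ev z j = -(\<alpha> + \<beta> * \<theta> j)" using abj by blast
    then have "\<forall>k\<in>{1..6}. ev z k = eps j k * (\<alpha> + \<beta> * \<theta> k)" using ab by (auto simp: eps_def)
    then show ?thesis using z_def by blast
  qed
qed

end
end


context six begin

context
  fixes D :: "'a^6^6" and c :: 'a
  assumes two: "(2::'a) \<noteq> 0"
  and Sp: "\<forall>p. inS \<theta> p \<longrightarrow> inS \<theta> (D *v p)"
  and Dinj: "\<forall>p. D *v p = 0 \<longrightarrow> p = 0"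
  and cnz: "c \<noteq> 0"
  and DWc: "\<forall>p. isW p \<longrightarrow> D *v p = c *s p"
begin

lemma pair:
  assumes i: "i \<in> {1..6}" and j: "j \<in> {1..6}" and ij: "i \<noteq> j"
  and gi: "\<forall>k\<in>{1..6}. ev (D *v yv i) k = eps i k * (\<alpha>i + \<beta>i * \<theta> k)"
  and gj: "\<forall>k\<in>{1..6}. ev (D *v yv j) k = eps j k * (\<alpha>j + \<beta>j * \<theta> k)"
  shows "\<alpha>j + \<beta>j * \<theta> i = c"
proof -
  have ginz: "\<alpha>i + \<beta>i * \<theta> i \<noteq> 0"
  proof
    assume h: "\<alpha>i + \<beta>i * \<theta> i = 0"
    have "\<forall>k\<in>{1..6}. ev (D *v yv i) k = \<alpha>i + \<beta>i * \<theta> k"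
      using gi h by (auto simp: eps_def)
    then have "isW (D *v yv i)" unfolding isW_def by blast
    then show False using noW[OF two Sp Dinj cnz DWc i] by blast
  qed
  have "isW one" unfolding isW_def using ev_one by (intro exI[of _ 1] exI[of _ 0]) auto
  then have Done: "D *v one = c *s one" using DWc by blast
  define y where "y = yv i + yv j - one"
  have yv: "ev y k = eps i k + eps j k - 1" if "k \<in> {1..6}" for k
    using that by (simp add: y_def ev_add ev_diff ev_yv ev_one)
  have "inS \<theta> y" by (rule inS_sq1) (use ij in \<open>auto simp: yv eps_def\<close>)
  then have iDy: "inS \<theta> (D *v y)" using Sp by blast
  define u where "u k = eps i k * (\<alpha>i + \<beta>i * \<theta> k) + eps j k * (\<alpha>j + \<beta>j * \<theta> k) - c" for k
  have Dyv: "ev (D *v y) k = u k" if "k \<in> {1..6}" for k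
    using that gi gj by (simp add: y_def vec.add vec.diff Done ev_add ev_diff ev_scale ev_one u_def)
  define h where "h k = (\<alpha>i + \<beta>i * \<theta> k) + (\<alpha>j + \<beta>j * \<theta> k) - c" for k
  have uh: "u k = h k" if "k \<noteq> i" "k \<noteq> j" for k using that by (simp add: u_def h_def eps_def)
  define A where "A k = (u k ^ 2 - h k ^ 2) / om k" for k
  have S: "\<theta> i ^ m * A i + \<theta> j ^ m * A j = 0" if m: "m \<le> 1" for m
  proof -
    have mm: "m \<in> {0,1,2}" using m by auto
    have q1: "(\<Sum>k\<in>{1..6}. \<theta> k ^ m * u k ^ 2 / om k) = 0"
    proof -
      have "(\<Sum>k\<in>{1..6}. \<theta> k ^ m * ev (D *v y) k ^ 2 / om k) = 0" using iDy mm unfolding inS_iff by blast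
      then show ?thesis by (simp add: Dyv)
    qed
    have q2: "(\<Sum>k\<in>{1..6}. \<theta> k ^ m * h k ^ 2 / om k) = 0"
    proof -
      have "(\<Sum>k\<in>{1..6}. \<theta> k ^ m * ((\<alpha>i + \<alpha>j - c) + (\<beta>i + \<beta>j) * \<theta> k) ^ 2 / om k) = 0"
        by (rule sumW) (use m in simp)
      moreover have "h k = (\<alpha>i + \<alpha>j - c) + (\<beta>i + \<beta>j) * \<theta> k" for k by (simp add: h_def algebra_simps)
      ultimately show ?thesis by simp
    qed
    have "(\<Sum>k\<in>{1..6}. \<theta> k ^ m * A k) = (\<Sum>k\<in>{1..6}. \<theta> k ^ m * u k ^ 2 / om k) - (\<Sum>k\<in>{1..6}. \<theta> k ^ m * h k ^ 2 / om k)"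
      by (simp add: A_def sum_subtractf[symmetric] algebra_simps diff_divide_distrib)
    then have s0: "(\<Sum>k\<in>{1..6}. \<theta> k ^ m * A k) = 0" using q1 q2 by simp
    have "(\<Sum>k\<in>{1..6}. \<theta> k ^ m * A k) = (\<Sum>k\<in>{i,j}. \<theta> k ^ m * A k)"
      by (rule sum.mono_neutral_right) (use i j uh in \<open>auto simp: A_def\<close>)
    also have "\<dots> = \<theta> i ^ m * A i + \<theta> j ^ m * A j" using ij by simp
    finally show ?thesis using s0 by simp
  qed
  have S0: "A i + A j = 0" using S[of 0] by simp
  have S1: "\<theta> i * A i + \<theta> j * A j = 0" using S[of 1] by simp
  have "(\<theta> i - \<theta> j) * A i = 0"
  proof -
    have "A j = - A i" using S0 by (simp add: eq_neg_iff_add_eq_0 add.commute)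
    then show ?thesis using S1 by (simp add: algebra_simps)
  qed
  then have "A i = 0" using th_ne[OF i j ij] by simp
  then have "u i ^ 2 - h i ^ 2 = 0" using om_nz[OF i] by (simp add: A_def)
  moreover have "u i ^ 2 - h i ^ 2 = (2 * (\<alpha>i + \<beta>i * \<theta> i)) * (2 * (c - (\<alpha>j + \<beta>j * \<theta> i)))"
    using ij by (simp add: u_def h_def eps_def power2_eq_square algebra_simps)
  ultimately have P: "(2 * (\<alpha>i + \<beta>i * \<theta> i)) * (2 * (c - (\<alpha>j + \<beta>j * \<theta> i))) = 0" by simp
  have "2 * (\<alpha>i + \<beta>i * \<theta> i) \<noteq> 0" using two ginz by (simp only: mult_eq_0_iff) auto
  with P have "2 * (c - (\<alpha>j + \<beta>j * \<theta> i)) = 0" by (simp only: mult_eq_0_iff) auto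
  then have "c - (\<alpha>j + \<beta>j * \<theta> i) = 0" using two by (simp only: mult_eq_0_iff) auto
  then show ?thesis by simp
qed

lemma Dy: assumes j: "j \<in> {1..6}" shows "D *v yv j = c *s yv j"
proof -
  obtain \<alpha>j \<beta>j where gj: "\<forall>k\<in>{1..6}. ev (D *v yv j) k = eps j k * (\<alpha>j + \<beta>j * \<theta> k)"
    using R2[OF two Sp Dinj cnz DWc j] by blast
  have c_at: "\<alpha>j + \<beta>j * \<theta> i = c" if i: "i \<in> {1..6}" "i \<noteq> j" for i
  proof -
    obtain \<alpha>i \<beta>i where gi: "\<forall>k\<in>{1..6}. ev (D *v yv i) k = eps i k * (\<alpha>i + \<beta>i * \<theta> k)"
      using R2[OF two Sp Dinj cnz DWc i(1)] by blast
    show ?thesis by (rule pair[OF i(1) j i(2) gi gj])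
  qed
  obtain a b where ab: "a \<in> {1..6}" "b \<in> {1..6}" "a \<noteq> b" "a \<noteq> j" "b \<noteq> j" by (rule two_points)
  have "\<beta>j = 0" "\<alpha>j = c" using affine_two[OF ab(1-3) c_at[OF ab(1,4)] c_at[OF ab(2,5)]] by auto
  then show ?thesis
    by (intro ev_inj) (simp add: gj ev_scale ev_yv mult.commute)
qed

lemma Dall: "D *v p = c *s p"
proof -
  have "isW one" unfolding isW_def using ev_one by (intro exI[of _ 1] exI[of _ 0]) auto
  then have Done: "D *v one = c *s one" using DWc by blast
  define q where "q = (\<Sum>j\<in>{1..6}. (ev p j / 2) *s (one - yv j))"
  have dl: "(ev p j / 2) * (1 - eps j k) = (if j = k then ev p k else 0)" for j k
    using two by (auto simp: eps_def)
  have "p = q"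
  proof (rule ev_inj, intro ballI)
    fix k :: nat assume k: "k \<in> {1..6}"
    have "ev q k = (\<Sum>j\<in>{1..6}. (ev p j / 2) * (1 - eps j k))"
      unfolding q_def ev_sum using k by (intro sum.cong) (auto simp: ev_scale ev_diff ev_one ev_yv right_diff_distrib)
    also have "\<dots> = ev p k" unfolding dl using k by simp
    finally show "ev p k = ev q k" by simp
  qed
  have "D *v q = (\<Sum>j\<in>{1..6}. (ev p j / 2) *s (c *s (one - yv j)))"
    unfolding q_def vec.sum vec.scale vec.diff
    by (intro sum.cong) (auto simp: Done Dy vector_ssub_ldistrib)
  also have "\<dots> = c *s q"
    unfolding q_def by (simp add: vec_eq_iff sum_component sum_distrib_left algebra_simps)
  finally show ?thesis using \<open>p = q\<close> by simp
qed

end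

lemma rigid:
  fixes D :: "'a^6^6"
  assumes two: "(2::'a) \<noteq> 0"
  and Sp: "\<forall>p. inS \<theta> p \<longrightarrow> inS \<theta> (D *v p)"
  and Dinj: "\<forall>p. D *v p = 0 \<longrightarrow> p = 0"
  and DW: "\<forall>u::'a^2. u \<noteq> 0 \<longrightarrow> (\<exists>c. c \<noteq> 0 \<and> D *v emb2 u = c *s emb2 u)"
  shows "\<exists>c. c \<noteq> 0 \<and> (\<forall>p. D *v p = c *s p)"
proof -
  obtain c where c: "c \<noteq> 0" "\<forall>p. isW p \<longrightarrow> D *v p = c *s p" using R1[OF DW] by blast
  show ?thesis using Dall[OF two Sp Dinj c(1) c(2)] c(1) by blast
qed

end


lemma two_eq_zero2: "(2::2) = 0" by simp

lemma Bv: "(B *v (u::'a::comm_semiring_1^2))$i = B$i$0 * u$0 + B$i$1 * u$1"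
  by (simp add: matrix_vector_mult_def sum_2 two_eq_zero2 add.commute)

lemma det2': "det (B::'a::comm_ring_1^2^2) = B$0$0 * B$1$1 - B$0$1 * B$1$0"
  using det_2[of B] by (simp add: two_eq_zero2 algebra_simps)

locale exist = six \<theta> for \<theta> :: "nat \<Rightarrow> 'a::field" +
  fixes B :: "'a^2^2" and \<sigma> :: "nat \<Rightarrow> nat"
  assumes sigma: "\<sigma> permutes {1..6}"
    and B_inv: "invertible B"
    and B_perm: "\<forall>i\<in>{1..6}. proj_eq (B *v frakp \<theta> i) (frakp \<theta> (\<sigma> i))"
begin

abbreviation "b00 \<equiv> B$0$0"
abbreviation "b01 \<equiv> B$0$1"
abbreviation "b10 \<equiv> B$1$0"
abbreviation "b11 \<equiv> B$1$1"
definition "dt = b00 * b11 - b01 * b10"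
definition "h i = b11 - b10 * \<theta> i"
definition "n i = b00 * \<theta> i - b01"
definition "G i = dt / h i"

lemma dt_nz: "dt \<noteq> 0"
  using B_inv by (simp add: invertible_det_nz det2' dt_def)

lemma sig_in: "i \<in> {1..6} \<Longrightarrow> \<sigma> i \<in> {1..6}"
  using permutes_in_image[OF sigma] by simp

lemma hn: assumes i: "i \<in> {1..6}" shows "h i \<noteq> 0" "\<theta> (\<sigma> i) = n i / h i"
proof -
  obtain c where c: "c \<noteq> 0" "frakp \<theta> (\<sigma> i) = c *s (B *v frakp \<theta> i)"
    using B_perm i unfolding proj_eq_def by blast
  have e1: "1 = c * (b10 * (- \<theta> i) + b11)"
    using arg_cong[OF c(2), of "\<lambda>v. v$1"] by (simp add: Bv frakp_def)
  have e0: "- \<theta> (\<sigma> i) = c * (b00 * (- \<theta> i) + b01)"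
    using arg_cong[OF c(2), of "\<lambda>v. v$0"] by (simp add: Bv frakp_def)
  have hh: "h i = b10 * (- \<theta> i) + b11" by (simp add: h_def)
  show hnz: "h i \<noteq> 0" using e1 hh by auto
  have "1 = c * h i" using e1[folded hh] .
  then have "c = 1 / h i" using hnz by (simp add: field_simps)
  moreover have "\<theta> (\<sigma> i) = c * (b00 * \<theta> i - b01)" using e0 by (simp add: algebra_simps)
  ultimately show "\<theta> (\<sigma> i) = n i / h i" by (simp add: n_def)
qed

lemma G_nz: "i \<in> {1..6} \<Longrightarrow> G i \<noteq> 0"
  using dt_nz hn by (simp add: G_def)

definition "\<tau> = inv \<sigma>"

lemma tau: "k \<in> {1..6} \<Longrightarrow> \<tau> k \<in> {1..6}" "\<sigma> (\<tau> k) = k" "\<tau> (\<sigma> i) = i"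
  using permutes_inverses[OF sigma] permutes_in_image[OF permutes_inv[OF sigma]]
  by (auto simp: \<tau>_def)

definition "fA p = vec_of (\<lambda>k. G (\<tau> k) * ev p (\<tau> k))"
definition "fI p = vec_of (\<lambda>i. ev p (\<sigma> i) / G i)"

lemma ev_fA: "k \<in> {1..6} \<Longrightarrow> ev (fA p) k = G (\<tau> k) * ev p (\<tau> k)"
  by (simp add: fA_def ev_vec_of)
lemma ev_fA_sig: "i \<in> {1..6} \<Longrightarrow> ev (fA p) (\<sigma> i) = G i * ev p i"
  using ev_fA[OF sig_in, of i p] by (simp add: tau)
lemma ev_fI: "i \<in> {1..6} \<Longrightarrow> ev (fI p) i = ev p (\<sigma> i) / G i"
  by (simp add: fI_def ev_vec_of)

lemma lin_fA: "Vector_Spaces.linear (*s) (*s) fA"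
proof unfold_locales
  show "fA (x + y) = fA x + fA y" for x y
    by (rule ev_inj) (simp add: ev_fA ev_add tau distrib_left)
  show "fA (r *s x) = r *s fA x" for r x
    by (rule ev_inj) (simp add: ev_fA ev_scale tau)
qed

lemma lin_fI: "Vector_Spaces.linear (*s) (*s) fI"
proof unfold_locales
  show "fI (x + y) = fI x + fI y" for x y
    by (rule ev_inj) (simp add: ev_fI ev_add sig_in add_divide_distrib)
  show "fI (r *s x) = r *s fI x" for r x
    by (rule ev_inj) (simp add: ev_fI ev_scale sig_in)
qed

definition "AM = matrix fA"
definition "AI = matrix fI"

lemma AM_v: "AM *v p = fA p" unfolding AM_def by (rule matrix_works[OF lin_fA])
lemma AI_v: "AI *v p = fI p" unfolding AI_def by (rule matrix_works[OF lin_fI])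

lemma fA_fI: "fA (fI p) = p"
proof (rule ev_inj, intro ballI)
  fix k :: nat assume k: "k \<in> {1..6}"
  show "ev (fA (fI p)) k = ev p k"
    using ev_fA[OF k, of "fI p"] ev_fI[OF tau(1)[OF k], of p] tau(2)[of k] G_nz[OF tau(1)[OF k]] by simp
qed
lemma fI_fA: "fI (fA p) = p"
  by (rule ev_inj) (simp add: ev_fA_sig ev_fI G_nz)

lemma AM_inv: "invertible AM"
  unfolding invertible_def
proof (intro exI[of _ AI] conjI)
  show "AM ** AI = mat 1"
    by (simp add: matrix_eq matrix_vector_mul_assoc[symmetric] AM_v AI_v fA_fI)
  show "AI ** AM = mat 1"
    by (simp add: matrix_eq matrix_vector_mul_assoc[symmetric] AM_v AI_v fI_fA)
qed

lemma M_aff: assumes i: "i \<in> {1..6}"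
  shows "G i * (\<alpha> + \<beta> * \<theta> i) = (b00 * \<alpha> + b01 * \<beta>) + (b10 * \<alpha> + b11 * \<beta>) * \<theta> (\<sigma> i)"
  unfolding hn(2)[OF i] using hn(1)[OF i] by (simp add: G_def dt_def n_def h_def field_simps)

lemma M_aff_rev: assumes i: "i \<in> {1..6}"
  shows "\<alpha>' + \<beta>' * \<theta> (\<sigma> i) = G i * ((b11 * \<alpha>' - b01 * \<beta>') / dt + ((b00 * \<beta>' - b10 * \<alpha>') / dt) * \<theta> i)"
proof -
  have "b00 * ((b11 * \<alpha>' - b01 * \<beta>') / dt) + b01 * ((b00 * \<beta>' - b10 * \<alpha>') / dt)
     = (b00 * (b11 * \<alpha>' - b01 * \<beta>') + b01 * (b00 * \<beta>' - b10 * \<alpha>')) / dt"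
    by (simp add: add_divide_distrib)
  also have "b00 * (b11 * \<alpha>' - b01 * \<beta>') + b01 * (b00 * \<beta>' - b10 * \<alpha>') = dt * \<alpha>'"
    by (simp add: dt_def algebra_simps)
  finally have 1: "b00 * ((b11 * \<alpha>' - b01 * \<beta>') / dt) + b01 * ((b00 * \<beta>' - b10 * \<alpha>') / dt) = \<alpha>'"
    using dt_nz by simp
  have "b10 * ((b11 * \<alpha>' - b01 * \<beta>') / dt) + b11 * ((b00 * \<beta>' - b10 * \<alpha>') / dt)
     = (b10 * (b11 * \<alpha>' - b01 * \<beta>') + b11 * (b00 * \<beta>' - b10 * \<alpha>')) / dt"
    by (simp add: add_divide_distrib)
  also have "b10 * (b11 * \<alpha>' - b01 * \<beta>') + b11 * (b00 * \<beta>' - b10 * \<alpha>') = dt * \<beta>'"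
    by (simp add: dt_def algebra_simps)
  finally have "b10 * ((b11 * \<alpha>' - b01 * \<beta>') / dt) + b11 * ((b00 * \<beta>' - b10 * \<alpha>') / dt) = \<beta>'"
    using dt_nz by simp
  with 1 show ?thesis
    using M_aff[OF i, of "(b11 * \<alpha>' - b01 * \<beta>') / dt" "(b00 * \<beta>' - b10 * \<alpha>') / dt"] by (simp only:)
qed

lemma restricts: "restricts_to AM B"
  unfolding restricts_to_def proj_eq_def
proof (intro allI impI exI[of _ 1] conjI)
  fix u :: "'a^2"
  show "emb2 (B *v u) = 1 *s (AM *v emb2 u)"
  proof (simp add: AM_v, rule ev_inj, intro ballI)
    fix k :: nat assume k: "k \<in> {1..6}"
    have "ev (fA (emb2 u)) k = G (\<tau> k) * (u$0 + u$1 * \<theta> (\<tau> k))" by (simp add: ev_fA[OF k] ev_emb2)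
    also have "\<dots> = ev (emb2 (B *v u)) k"
      using M_aff[OF tau(1)[OF k]] tau(2)[of k] by (simp add: ev_emb2 Bv)
    finally show "ev (emb2 (B *v u)) k = ev (fA (emb2 u)) k" by simp
  qed
qed simp

end


lemma lin3: fixes a b c :: "'a::comm_ring_1" shows "(\<Sum>i\<in>K. (a * x i + b * y i + c * z i) * w i) =
  a * (\<Sum>i\<in>K. x i * w i) + b * (\<Sum>i\<in>K. y i * w i) + c * (\<Sum>i\<in>K. z i * w i)"
proof -
  have "(\<Sum>i\<in>K. (a * x i + b * y i + c * z i) * w i) = (\<Sum>i\<in>K. a * (x i * w i) + b * (y i * w i) + c * (z i * w i))"
    by (simp add: algebra_simps)
  then show ?thesis by (simp add: sum.distrib sum_distrib_left)
qed

context six begin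

lemma isW_iff: "isW p \<longleftrightarrow> p$2 = 0 \<and> p$3 = 0 \<and> p$4 = 0 \<and> p$5 = 0"
proof
  assume "isW p"
  then obtain \<alpha> \<beta> where ab: "\<forall>k\<in>{1..6}. ev p k = \<alpha> + \<beta> * \<theta> k" unfolding isW_def by blast
  have "p = emb2 (\<chi> i. if i = 0 then \<alpha> else \<beta>)"
    by (rule ev_inj) (simp add: ab ev_emb2)
  then show "p$2 = 0 \<and> p$3 = 0 \<and> p$4 = 0 \<and> p$5 = 0" by (simp add: emb2_def)
next
  assume "p$2 = 0 \<and> p$3 = 0 \<and> p$4 = 0 \<and> p$5 = 0"
  then have "\<forall>k\<in>{1..6}. ev p k = p$0 + p$1 * \<theta> k" by (simp add: evalP_def)
  then show "isW p" unfolding isW_def by blast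
qed

lemma inDelta0_iff: "inDelta0 p \<longleftrightarrow> p \<noteq> 0 \<and> isW p"
  by (simp add: inDelta0_def isW_iff)

end

context exist begin

lemma fA0: "fA 0 = 0" by (rule ev_inj) (simp add: ev_fA ev_zero)
lemma fI0: "fI 0 = 0" by (rule ev_inj) (simp add: ev_fI ev_zero)

lemma fA_zero: "fA p = 0 \<longleftrightarrow> p = 0"
proof
  assume "fA p = 0"
  then have "fI (fA p) = fI 0" by simp
  then show "p = 0" using fI_fA fI0 by simp
qed (simp add: fA0)

lemma isW_fA: "isW (fA p) \<longleftrightarrow> isW p"
proof
  assume "isW (fA p)"
  then obtain \<alpha> \<beta> where ab: "\<forall>k\<in>{1..6}. ev (fA p) k = \<alpha> + \<beta> * \<theta> k" unfolding isW_def by blast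
  have "ev p i = (b11 * \<alpha> - b01 * \<beta>) / dt + ((b00 * \<beta> - b10 * \<alpha>) / dt) * \<theta> i" if i: "i \<in> {1..6}" for i
  proof -
    have "G i * ev p i = \<alpha> + \<beta> * \<theta> (\<sigma> i)" using ab[rule_format, OF sig_in[OF i]] ev_fA_sig[OF i] by simp
    also have "\<dots> = G i * ((b11 * \<alpha> - b01 * \<beta>) / dt + ((b00 * \<beta> - b10 * \<alpha>) / dt) * \<theta> i)"
      by (rule M_aff_rev[OF i])
    finally show ?thesis using G_nz[OF i] by simp
  qed
  then show "isW p" unfolding isW_def by blast
next
  assume "isW p"
  then obtain \<alpha> \<beta> where ab: "\<forall>k\<in>{1..6}. ev p k = \<alpha> + \<beta> * \<theta> k" unfolding isW_def by blast
  have "ev (fA p) k = (b00 * \<alpha> + b01 * \<beta>) + (b10 * \<alpha> + b11 * \<beta>) * \<theta> k" if k: "k \<in> {1..6}" for k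
    using ev_fA[OF k, of p] ab tau(1)[OF k] M_aff[OF tau(1)[OF k], of \<alpha> \<beta>] tau(2)[of k] by simp
  then show "isW (fA p)" unfolding isW_def by blast
qed

lemma Delta_AM: "inDelta0 (AM *v p) \<longleftrightarrow> inDelta0 p"
  by (simp add: inDelta0_iff AM_v fA_zero isW_fA)

definition "Hc = (\<Prod>l\<in>{1..6}. h l)"

lemma Hc_nz: "Hc \<noteq> 0" using hn(1) by (simp add: Hc_def)

lemma th_diff: assumes "i \<in> {1..6}" "l \<in> {1..6}"
  shows "\<theta> (\<sigma> i) - \<theta> (\<sigma> l) = dt * (\<theta> i - \<theta> l) / (h i * h l)"
  unfolding hn(2)[OF assms(1)] hn(2)[OF assms(2)] using hn(1)[OF assms(1)] hn(1)[OF assms(2)]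
  by (simp add: dt_def n_def h_def field_simps)

lemma om_sig: assumes i: "i \<in> {1..6}"
  shows "om (\<sigma> i) = dt ^ 5 * om i / (h i ^ 5 * (\<Prod>l\<in>{1..6}-{i}. h l))"
proof -
  have inj': "inj_on \<sigma> ({1..6} - {i})" using permutes_inj_on[OF sigma] .
  have im: "\<sigma> ` ({1..6} - {i}) = {1..6} - {\<sigma> i}"
  proof -
    have "\<sigma> ` ({1..6} - {i}) = \<sigma> ` {1..6} - \<sigma> ` {i}"
      by (rule inj_on_image_set_diff[OF permutes_inj_on[OF sigma]]) (use i in auto)
    then show ?thesis using permutes_image[OF sigma] by simp
  qed
  have "om (\<sigma> i) = (\<Prod>k\<in>\<sigma> ` ({1..6} - {i}). \<theta> (\<sigma> i) - \<theta> k)"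
    unfolding omega_def im ..
  also have "\<dots> = (\<Prod>l\<in>{1..6} - {i}. \<theta> (\<sigma> i) - \<theta> (\<sigma> l))"
    by (subst prod.reindex[OF inj']) simp
  also have "\<dots> = (\<Prod>l\<in>{1..6} - {i}. dt * (\<theta> i - \<theta> l) / (h i * h l))"
    using i by (intro prod.cong) (auto simp: th_diff)
  also have "\<dots> = dt ^ 5 * om i / (h i ^ 5 * (\<Prod>l\<in>{1..6}-{i}. h l))"
    using i by (simp add: prod_dividef prod.distrib omega_def)
  finally show ?thesis .
qed

lemma term_sig: assumes i: "i \<in> {1..6}"
  shows "\<theta> (\<sigma> i) ^ m * (G i * x) ^ 2 / om (\<sigma> i) = (Hc / dt ^ 3) * ((\<theta> (\<sigma> i)) ^ m * h i ^ 2) * (x ^ 2 / om i)"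
proof -
  define P where "P = (\<Prod>l\<in>{1..6}-{i}. h l)"
  have Hc: "Hc = h i * P" unfolding Hc_def P_def using i by (simp add: prod.remove)
  have Pnz: "P \<noteq> 0" using Hc Hc_nz by auto
  show ?thesis
    unfolding om_sig[OF i] Hc G_def P_def[symmetric]
    using hn(1)[OF i] dt_nz om_nz[OF i] Pnz
    by (simp add: field_simps power2_eq_square eval_nat_numeral)
qed

end


context exist begin

lemma tpow: assumes i: "i \<in> {1..6}"
  shows "\<theta> (\<sigma> i) ^ 0 * h i ^ 2 = b11^2 * \<theta> i ^ 0 + (-2*b11*b10) * \<theta> i ^ 1 + b10^2 * \<theta> i ^ 2"
    "\<theta> (\<sigma> i) ^ 1 * h i ^ 2 = (-b01*b11) * \<theta> i ^ 0 + (b00*b11 + b01*b10) * \<theta> i ^ 1 + (-b00*b10) * \<theta> i ^ 2"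
    "\<theta> (\<sigma> i) ^ 2 * h i ^ 2 = b01^2 * \<theta> i ^ 0 + (-2*b00*b01) * \<theta> i ^ 1 + b00^2 * \<theta> i ^ 2"
proof -
  have e: "\<theta> (\<sigma> i) * h i = n i" using hn[OF i] by simp
  have a: "\<theta> (\<sigma> i) ^ 1 * h i ^ 2 = n i * h i" using e by (simp add: power2_eq_square mult.assoc[symmetric])
  have b: "\<theta> (\<sigma> i) ^ 2 * h i ^ 2 = n i ^ 2" using e by (simp add: power_mult_distrib[symmetric])
  show "\<theta> (\<sigma> i) ^ 0 * h i ^ 2 = b11^2 * \<theta> i ^ 0 + (-2*b11*b10) * \<theta> i ^ 1 + b10^2 * \<theta> i ^ 2"
    by (simp add: h_def power2_eq_square algebra_simps)
  show "\<theta> (\<sigma> i) ^ 1 * h i ^ 2 = (-b01*b11) * \<theta> i ^ 0 + (b00*b11 + b01*b10) * \<theta> i ^ 1 + (-b00*b10) * \<theta> i ^ 2"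
    unfolding a by (simp add: h_def n_def power2_eq_square algebra_simps)
  show "\<theta> (\<sigma> i) ^ 2 * h i ^ 2 = b01^2 * \<theta> i ^ 0 + (-2*b00*b01) * \<theta> i ^ 1 + b00^2 * \<theta> i ^ 2"
    unfolding b by (simp add: n_def power2_eq_square algebra_simps)
qed

lemma tpow_rev: assumes i: "i \<in> {1..6}"
  shows "dt^2 * \<theta> i ^ 0 = b00^2 * (\<theta> (\<sigma> i) ^ 0 * h i ^ 2) + (2*b10*b00) * (\<theta> (\<sigma> i) ^ 1 * h i ^ 2) + b10^2 * (\<theta> (\<sigma> i) ^ 2 * h i ^ 2)"
    "dt^2 * \<theta> i ^ 1 = (b01*b00) * (\<theta> (\<sigma> i) ^ 0 * h i ^ 2) + (b11*b00 + b01*b10) * (\<theta> (\<sigma> i) ^ 1 * h i ^ 2) + (b11*b10) * (\<theta> (\<sigma> i) ^ 2 * h i ^ 2)"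
    "dt^2 * \<theta> i ^ 2 = b01^2 * (\<theta> (\<sigma> i) ^ 0 * h i ^ 2) + (2*b11*b01) * (\<theta> (\<sigma> i) ^ 1 * h i ^ 2) + b11^2 * (\<theta> (\<sigma> i) ^ 2 * h i ^ 2)"
proof -
  have e: "\<theta> (\<sigma> i) * h i = n i" using hn[OF i] by simp
  have a: "\<theta> (\<sigma> i) ^ 1 * h i ^ 2 = n i * h i" using e by (simp add: power2_eq_square mult.assoc[symmetric])
  have b: "\<theta> (\<sigma> i) ^ 2 * h i ^ 2 = n i ^ 2" using e by (simp add: power_mult_distrib[symmetric])
  show "dt^2 * \<theta> i ^ 0 = b00^2 * (\<theta> (\<sigma> i) ^ 0 * h i ^ 2) + (2*b10*b00) * (\<theta> (\<sigma> i) ^ 1 * h i ^ 2) + b10^2 * (\<theta> (\<sigma> i) ^ 2 * h i ^ 2)"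
    unfolding a b by (simp add: h_def n_def dt_def power2_eq_square algebra_simps)
  show "dt^2 * \<theta> i ^ 1 = (b01*b00) * (\<theta> (\<sigma> i) ^ 0 * h i ^ 2) + (b11*b00 + b01*b10) * (\<theta> (\<sigma> i) ^ 1 * h i ^ 2) + (b11*b10) * (\<theta> (\<sigma> i) ^ 2 * h i ^ 2)"
    unfolding a b by (simp add: h_def n_def dt_def power2_eq_square algebra_simps)
  show "dt^2 * \<theta> i ^ 2 = b01^2 * (\<theta> (\<sigma> i) ^ 0 * h i ^ 2) + (2*b11*b01) * (\<theta> (\<sigma> i) ^ 1 * h i ^ 2) + b11^2 * (\<theta> (\<sigma> i) ^ 2 * h i ^ 2)"
    unfolding a b by (simp add: h_def n_def dt_def power2_eq_square algebra_simps)
qed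

lemma S_AM: "inS \<theta> (AM *v p) \<longleftrightarrow> inS \<theta> p"
proof -
  define w where "w i = ev p i ^ 2 / om i" for i
  define Sm where "Sm m = (\<Sum>i\<in>{1..6}. \<theta> i ^ m * w i)" for m
  define T where "T m = (\<Sum>i\<in>{1..6}. (\<theta> (\<sigma> i) ^ m * h i ^ 2) * w i)" for m
  have qf: "(\<Sum>k\<in>{1..6}. \<theta> k ^ m * ev (fA p) k ^ 2 / om k) = (Hc / dt ^ 3) * T m" for m
  proof -
    have "(\<Sum>k\<in>{1..6}. \<theta> k ^ m * ev (fA p) k ^ 2 / om k) =
          (\<Sum>i\<in>{1..6}. \<theta> (\<sigma> i) ^ m * ev (fA p) (\<sigma> i) ^ 2 / om (\<sigma> i))"
      by (rule sum.reindex_bij_betw[OF permutes_imp_bij[OF sigma], symmetric])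
    also have "\<dots> = (\<Sum>i\<in>{1..6}. (Hc / dt ^ 3) * ((\<theta> (\<sigma> i) ^ m * h i ^ 2) * w i))"
      by (intro sum.cong) (auto simp: ev_fA_sig term_sig w_def)
    also have "\<dots> = (Hc / dt ^ 3) * T m" by (simp add: T_def sum_distrib_left)
    finally show ?thesis .
  qed
  have qp: "(\<Sum>k\<in>{1..6}. \<theta> k ^ m * ev p k ^ 2 / om k) = Sm m" for m
    by (simp add: Sm_def w_def)
  have T0: "T 0 = b11^2 * Sm 0 + (-2*b11*b10) * Sm 1 + b10^2 * Sm 2"
    unfolding T_def Sm_def lin3[symmetric] by (rule sum.cong[OF refl]) (metis tpow(1))
  have T1: "T 1 = (-b01*b11) * Sm 0 + (b00*b11 + b01*b10) * Sm 1 + (-b00*b10) * Sm 2"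
    unfolding T_def Sm_def lin3[symmetric] by (rule sum.cong[OF refl]) (metis tpow(2))
  have T2: "T 2 = b01^2 * Sm 0 + (-2*b00*b01) * Sm 1 + b00^2 * Sm 2"
    unfolding T_def Sm_def lin3[symmetric] by (rule sum.cong[OF refl]) (metis tpow(3))
  have S0: "dt^2 * Sm 0 = b00^2 * T 0 + (2*b10*b00) * T 1 + b10^2 * T 2"
  proof -
    have "dt^2 * Sm 0 = (\<Sum>i\<in>{1..6}. (b00^2 * (\<theta> (\<sigma> i) ^ 0 * h i ^ 2) + (2*b10*b00) * (\<theta> (\<sigma> i) ^ 1 * h i ^ 2) + b10^2 * (\<theta> (\<sigma> i) ^ 2 * h i ^ 2)) * w i)"
      unfolding Sm_def sum_distrib_left by (rule sum.cong[OF refl], subst tpow_rev(1)[symmetric], assumption, rule mult.assoc[symmetric])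
    also have "\<dots> = b00^2 * T 0 + (2*b10*b00) * T 1 + b10^2 * T 2" unfolding lin3 T_def ..
    finally show ?thesis .
  qed
  have S1: "dt^2 * Sm 1 = (b01*b00) * T 0 + (b11*b00 + b01*b10) * T 1 + (b11*b10) * T 2"
  proof -
    have "dt^2 * Sm 1 = (\<Sum>i\<in>{1..6}. ((b01*b00) * (\<theta> (\<sigma> i) ^ 0 * h i ^ 2) + (b11*b00 + b01*b10) * (\<theta> (\<sigma> i) ^ 1 * h i ^ 2) + (b11*b10) * (\<theta> (\<sigma> i) ^ 2 * h i ^ 2)) * w i)"
      unfolding Sm_def sum_distrib_left by (rule sum.cong[OF refl], subst tpow_rev(2)[symmetric], assumption, rule mult.assoc[symmetric])
    also have "\<dots> = (b01*b00) * T 0 + (b11*b00 + b01*b10) * T 1 + (b11*b10) * T 2" unfolding lin3 T_def ..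
    finally show ?thesis .
  qed
  have S2: "dt^2 * Sm 2 = b01^2 * T 0 + (2*b11*b01) * T 1 + b11^2 * T 2"
  proof -
    have "dt^2 * Sm 2 = (\<Sum>i\<in>{1..6}. (b01^2 * (\<theta> (\<sigma> i) ^ 0 * h i ^ 2) + (2*b11*b01) * (\<theta> (\<sigma> i) ^ 1 * h i ^ 2) + b11^2 * (\<theta> (\<sigma> i) ^ 2 * h i ^ 2)) * w i)"
      unfolding Sm_def sum_distrib_left by (rule sum.cong[OF refl], subst tpow_rev(3)[symmetric], assumption, rule mult.assoc[symmetric])
    also have "\<dots> = b01^2 * T 0 + (2*b11*b01) * T 1 + b11^2 * T 2" unfolding lin3 T_def ..
    finally show ?thesis .
  qed
  have kz: "Hc / dt ^ 3 \<noteq> 0" using Hc_nz dt_nz by simp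
  have "inS \<theta> (AM *v p) \<longleftrightarrow> p \<noteq> 0 \<and> T 0 = 0 \<and> T 1 = 0 \<and> T 2 = 0"
    unfolding inS_iff AM_v qf using kz fA_zero by simp
  also have "\<dots> \<longleftrightarrow> p \<noteq> 0 \<and> Sm 0 = 0 \<and> Sm 1 = 0 \<and> Sm 2 = 0"
  proof -
    have "(T 0 = 0 \<and> T 1 = 0 \<and> T 2 = 0) \<longleftrightarrow> (Sm 0 = 0 \<and> Sm 1 = 0 \<and> Sm 2 = 0)"
    proof
      assume "T 0 = 0 \<and> T 1 = 0 \<and> T 2 = 0"
      then have "dt^2 * Sm 0 = 0" "dt^2 * Sm 1 = 0" "dt^2 * Sm 2 = 0" using S0 S1 S2 by simp_all
      then show "Sm 0 = 0 \<and> Sm 1 = 0 \<and> Sm 2 = 0" using dt_nz by simp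
    next
      assume "Sm 0 = 0 \<and> Sm 1 = 0 \<and> Sm 2 = 0"
      then show "T 0 = 0 \<and> T 1 = 0 \<and> T 2 = 0" using T0 T1 T2 by simp
    qed
    then show ?thesis by blast
  qed
  also have "\<dots> \<longleftrightarrow> inS \<theta> p" unfolding inS_iff qp by simp
  finally show ?thesis .
qed

end


context exist begin
lemma AM_AI: "AM ** AI = mat 1"
  by (simp add: matrix_eq matrix_vector_mul_assoc[symmetric] AM_v AI_v fA_fI)
lemma AI_AM: "AI ** AM = mat 1"
  by (simp add: matrix_eq matrix_vector_mul_assoc[symmetric] AM_v AI_v fI_fA)
end

theorem mainTheorem12:
  fixes F :: "'a::field poly" and \<theta> :: "nat \<Rightarrow> 'a" and \<sigma> :: "nat \<Rightarrow> nat"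
    and B :: "'a ^ 2 ^ 2"
  assumes alg_closed: "alg_closed_field TYPE('a)"
    and char_ne_2: "(2::'a) \<noteq> 0"
    and degF: "degree F = 6"
    and distinct_roots: "inj_on \<theta> {1..6}"
    and roots: "\<forall>i\<in>{1..6}. poly F (\<theta> i) = 0"
    and sigma: "\<sigma> permutes {1..6}"
    and B_inv: "invertible B"
    and B_perm: "\<forall>i\<in>{1..6}. proj_eq (B *v frakp \<theta> i) (frakp \<theta> (\<sigma> i))"
  shows "\<exists>A. in_GL0_S \<theta> A \<and> restricts_to A B \<and>
           (\<forall>A'. in_GL0_S \<theta> A' \<and> restricts_to A' B \<longrightarrow>
                  (\<forall>p. inS \<theta> p \<longrightarrow> proj_eq (A *v p) (A' *v p)))"
proof -
  interpret E: exist \<theta> B \<sigma>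
    by unfold_locales (use distinct_roots sigma B_inv B_perm in auto)
  let ?A = "E.AM"
  have GL0: "in_GL0_S \<theta> ?A"
    unfolding in_GL0_S_def in_GL_S_def using E.AM_inv E.S_AM E.Delta_AM by blast
  have uniq: "proj_eq (?A *v p) (A' *v p)"
    if A': "in_GL0_S \<theta> A'" "restricts_to A' B" for A' p
  proof -
    define D where "D = E.AI ** A'"
    have bk: "?A *v (D *v x) = A' *v x" for x
      unfolding D_def by (simp add: matrix_vector_mul_assoc matrix_mul_assoc E.AM_AI)
    have A'S: "inS \<theta> (A' *v x) \<longleftrightarrow> inS \<theta> x" for x using A'(1) by (simp add: in_GL0_S_def in_GL_S_def)
    have Sp: "\<forall>x. inS \<theta> x \<longrightarrow> inS \<theta> (D *v x)"
      using E.S_AM bk A'S by metis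
    obtain A'' where A'': "A'' ** A' = mat 1" using A'(1) by (auto simp: in_GL0_S_def in_GL_S_def invertible_def)
    have Dinj: "\<forall>x. D *v x = 0 \<longrightarrow> x = 0"
    proof (intro allI impI)
      fix x assume "D *v x = 0"
      then have "A' *v x = 0" using bk[of x] by simp
      then have "A'' *v (A' *v x) = 0" by simp
      then show "x = 0" by (simp add: matrix_vector_mul_assoc A'')
    qed
    have DW: "\<forall>u::'a^2. u \<noteq> 0 \<longrightarrow> (\<exists>c. c \<noteq> 0 \<and> D *v emb2 u = c *s emb2 u)"
    proof (intro allI impI)
      fix u :: "'a^2" assume u: "u \<noteq> 0"
      obtain c1 where c1: "c1 \<noteq> 0" "emb2 (B *v u) = c1 *s (A' *v emb2 u)"
        using A'(2) u unfolding restricts_to_def proj_eq_def by blast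
      obtain c2 where c2: "c2 \<noteq> 0" "emb2 (B *v u) = c2 *s (?A *v emb2 u)"
        using E.restricts u unfolding restricts_to_def proj_eq_def by blast
      have "A' *v emb2 u = (c2 / c1) *s (?A *v emb2 u)"
        using c1 c2 by (metis (no_types, lifting) vector_smult_assoc divide_inverse_commute
            field_class.field_inverse mult.commute vector_smult_lid nonzero_divide_eq_eq divide_self_if)
      then have "D *v emb2 u = (c2 / c1) *s emb2 u"
        unfolding D_def by (simp add: matrix_vector_mul_assoc[symmetric] vec.scale
            matrix_vector_mul_assoc E.AI_AM)
      then show "\<exists>c. c \<noteq> 0 \<and> D *v emb2 u = c *s emb2 u" using c1(1) c2(1)
        by (intro exI[of _ "c2 / c1"]) simp
    qed
    obtain c where c: "c \<noteq> 0" "\<forall>x. D *v x = c *s x"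
      using E.rigid[OF char_ne_2 Sp Dinj DW] by blast
    have "A' *v p = c *s (?A *v p)" using bk[of p] c(2) by (simp add: vec.scale)
    then show ?thesis unfolding proj_eq_def using c(1) by blast
  qed
  show ?thesis using GL0 E.restricts uniq by blast
qed


end
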